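(* Let $d\ge2$, $N\ge1$ and let $\rho$ be a state on $(\mathbb{C}^d)^{\otimes N}$. For operators $\lambda_1,\dots,\lambda_N$ on $\mathbb{C}^d$ define $$\mathcal{R}(\lambda_1,\dots,\lambda_N)=\int dU_1\cdots\int dU_N\;\Big|\mathrm{Tr}\Big(\rho\,\bigotimes_{n=1}^{N}U_n^\dagger\lambda_n^\dagger U_n\Big)\Big|^2,$$ where each integral is over $U(d)$ with respect to the normalized Haar measure. Then $\mathcal{R}(\lambda_1,\dots,\lambda_N)$ takes the same value for all choices of $\lambda_1,\dots,\lambda_N$ satisfying $\mathrm{Tr}(\lambda_n)=0$ and $\mathrm{Tr}(\lambda_n\lambda_n^\dagger)=d$ for every $n$. *)

theory Defs
  imports "HOL-Probability.Probability"
begin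

text \<open>Complex d x d matrices are represented as complex^'d^'d, with 'd a finite type, d = CARD('d).\<close>

definition cadj :: "complex^'d^'d \<Rightarrow> complex^'d^'d" where
  "cadj A = (\<chi> i j. cnj (A $ j $ i))"

definition unitary_mat :: "complex^'d^'d \<Rightarrow> bool" where
  "unitary_mat U \<longleftrightarrow> cadj U ** U = mat 1 \<and> U ** cadj U = mat 1"

text \<open>A normalized Haar measure on U(d): a Borel probability measure on the space of
  complex d x d matrices, concentrated on the unitary group and invariant under left
  multiplication by unitaries (on a compact group this determines it uniquely).\<close>

definition is_haar :: "(complex^'d^'d) measure \<Rightarrow> bool" where
  "is_haar M \<longleftrightarrow> prob_space M \<and> sets M = sets borel \<and>
     (AE U in M. unitary_mat U) \<and>
     (\<forall>V. unitary_mat V \<longrightarrow> distr M borel (\<lambda>U. V ** U) = M)"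

definition haar :: "(complex^'d^'d) measure" where
  "haar = (SOME M. is_haar M)"

text \<open>Kronecker (tensor) product of a family of d x d matrices indexed by the finite type 'n
  (N = CARD('n) tensor factors); the product space (C^d)^{\<otimes>N} is indexed by 'n \<Rightarrow> 'd.\<close>

definition tensor_prod :: "('n::finite \<Rightarrow> complex^'d^'d) \<Rightarrow> complex^('n \<Rightarrow> 'd)^('n \<Rightarrow> 'd)" where
  "tensor_prod A = (\<chi> i j. \<Prod>n\<in>UNIV. A n $ (i n) $ (j n))"

text \<open>Density matrices (states): positive semidefinite with unit trace.\<close>

definition is_state :: "complex^'m^'m \<Rightarrow> bool" where
  "is_state \<rho> \<longleftrightarrow> cadj \<rho> = \<rho> \<and>
     (\<forall>v::complex^'m. let q = (\<Sum>i\<in>UNIV. \<Sum>j\<in>UNIV. cnj (v $ i) * \<rho> $ i $ j * v $ j)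
                      in Im q = 0 \<and> Re q \<ge> 0) \<and>
     trace \<rho> = 1"

definition R_fun :: "complex^('n::finite \<Rightarrow> 'd)^('n \<Rightarrow> 'd) \<Rightarrow> ('n \<Rightarrow> complex^'d^'d) \<Rightarrow> real" where
  "R_fun \<rho> lam = (\<integral>Us. (cmod (trace (\<rho> ** tensor_prod (\<lambda>n. cadj (Us n) ** cadj (lam n) ** Us n))))\<^sup>2
                    \<partial>(PiM UNIV (\<lambda>_. haar)))"

end

theory Submission
  imports Defs
begin


lemma cadj_nth[simp]: "cadj A $ i $ j = cnj (A $ j $ i)"
  by (simp add: cadj_def)

lemma cadj_cadj[simp]: "cadj (cadj A) = A"
  by (simp add: vec_eq_iff)

lemma cadj_mult: "cadj (A ** B) = cadj B ** cadj A"
  by (simp add: vec_eq_iff matrix_matrix_mult_def mult.commute)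

lemma cadj_mat[simp]: "cadj (mat 1 :: complex^'d^'d) = mat 1"
  by (simp add: vec_eq_iff mat_def)

lemma unitary_mat_left: "unitary_mat U \<longleftrightarrow> cadj U ** U = mat 1"
  unfolding unitary_mat_def using matrix_left_right_inverse by blast

lemma unitary_cadj: "unitary_mat U \<Longrightarrow> unitary_mat (cadj U)"
  by (simp add: unitary_mat_def)

lemma unitary_mult: "unitary_mat U \<Longrightarrow> unitary_mat V \<Longrightarrow> unitary_mat (U ** V)"
  unfolding unitary_mat_left cadj_mult
  by (metis matrix_mul_assoc matrix_mul_lid)

lemma unitary_one[simp]: "unitary_mat (mat 1)"
  by (simp add: unitary_mat_def)

lemma unitary_entry_le:
  assumes "unitary_mat U" shows "cmod (U $ i $ j) \<le> 1"
proof -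
  have "(cadj U ** U) $ j $ j = 1" using assms by (simp add: unitary_mat_def mat_def)
  hence e: "(\<Sum>k\<in>UNIV. cnj (U $ k $ j) * U $ k $ j) = 1"
    by (simp add: matrix_matrix_mult_def)
  have "(\<Sum>k\<in>UNIV. cnj (U $ k $ j) * U $ k $ j) = of_real (\<Sum>k\<in>UNIV. (cmod (U $ k $ j))^2)"
    unfolding of_real_sum by (intro sum.cong refl) (metis complex_norm_square mult.commute)
  hence s: "(\<Sum>k\<in>UNIV. (cmod (U $ k $ j))^2) = 1" using e
    by (metis of_real_eq_1_iff)
  have "(cmod (U $ i $ j))^2 \<le> (\<Sum>k\<in>UNIV. (cmod (U $ k $ j))^2)"
    by (rule member_le_sum) auto
  hence "(cmod (U $ i $ j))^2 \<le> 1" using s by simp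
  thus ?thesis by (simp add: power_le_one_iff abs_le_iff)
qed

lemma continuous_on_mat_mult[continuous_intros]:
  fixes f g :: "'a::topological_space \<Rightarrow> complex^'d^'d"
  assumes "continuous_on S f" "continuous_on S g"
  shows "continuous_on S (\<lambda>x. f x ** g x)"
  unfolding matrix_matrix_mult_def
  by (intro continuous_on_vec_lambda continuous_intros continuous_on_component assms)

lemma continuous_on_cadj[continuous_intros]:
  fixes f :: "'a::topological_space \<Rightarrow> complex^'d^'d"
  assumes "continuous_on S f"
  shows "continuous_on S (\<lambda>x. cadj (f x))"
  unfolding cadj_def
  by (intro continuous_on_vec_lambda continuous_intros continuous_on_component assms)



definition ip :: "('d::finite \<Rightarrow> complex) \<Rightarrow> ('d \<Rightarrow> complex) \<Rightarrow> complex" where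
  "ip u v = (\<Sum>i\<in>UNIV. cnj (u i) * v i)"

primrec gs :: "(nat \<Rightarrow> 'd::finite) \<Rightarrow> complex^'d^'d \<Rightarrow> nat \<Rightarrow> nat \<Rightarrow> 'd \<Rightarrow> complex" where
  "gs e G 0 = (\<lambda>j i. 0)"
| "gs e G (Suc k) = (let f = gs e G k;
      w = (\<lambda>i. G$i$(e k) - (\<Sum>j<k. ip (f j) (\<lambda>l. G$l$(e k)) * f j i)) in
      f(k := (\<lambda>i. w i / of_real (sqrt (\<Sum>i\<in>UNIV. (cmod (w i))^2)))))"

definition gw :: "(nat \<Rightarrow> 'd::finite) \<Rightarrow> complex^'d^'d \<Rightarrow> nat \<Rightarrow> 'd \<Rightarrow> complex" where
  "gw e G k = (\<lambda>i. G$i$(e k) - (\<Sum>j<k. ip (gs e G k j) (\<lambda>l. G$l$(e k)) * gs e G k j i))"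

definition gn :: "(nat \<Rightarrow> 'd::finite) \<Rightarrow> complex^'d^'d \<Rightarrow> nat \<Rightarrow> real" where
  "gn e G k = sqrt (\<Sum>i\<in>UNIV. (cmod (gw e G k i))^2)"

lemma gs_Suc': "gs e G (Suc k) = (gs e G k)(k := (\<lambda>i. gw e G k i / of_real (gn e G k)))"
  by (simp add: gw_def gn_def Let_def)

declare gs.simps(2)[simp del]

lemma gs_ge: "k \<le> j \<Longrightarrow> gs e G k j = (\<lambda>i. 0)"
  by (induction k) (auto simp: gs_Suc')

lemma ip_cnj: "ip v u = cnj (ip u v)"
  by (simp add: ip_def mult.commute)

lemma ip_self: "ip u u = of_real (\<Sum>i\<in>UNIV. (cmod (u i))^2)"
  unfolding ip_def of_real_sum by (intro sum.cong refl) (metis complex_norm_square mult.commute)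

lemma ip_lin_right: "ip u (\<lambda>i. v i - (\<Sum>j\<in>J. c j * w j i)) = ip u v - (\<Sum>j\<in>J. c j * ip u (w j))"
  by (simp add: ip_def sum_subtractf ring_distribs sum_distrib_left sum_distrib_right)
     (subst sum.swap, simp add: algebra_simps sum_distrib_left)

lemma ip_scale_right: "ip u (\<lambda>i. v i / c) = ip u v / c"
  by (simp add: ip_def sum_divide_distrib)

lemma ip_scale_left: "ip (\<lambda>i. v i / c) u = ip v u / cnj c"
  by (simp add: ip_def sum_divide_distrib)

lemma gs_orthonormal:
  assumes "\<forall>m<k. gn e G m \<noteq> 0"
  shows "\<forall>j<k. \<forall>l<k. ip (gs e G k j) (gs e G k l) = (if j = l then 1 else 0)"
  using assms
proof (induction k)
  case 0 then show ?case by simp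
next
  case (Suc k)
  have IH: "\<forall>j<k. \<forall>l<k. ip (gs e G k j) (gs e G k l) = (if j = l then 1 else 0)"
    using Suc by auto
  have nz: "gn e G k \<noteq> 0" using Suc by auto
  define w where "w = gw e G k"
  define g where "g = (\<lambda>l. G$l$(e k))"
  have w: "w = (\<lambda>i. g i - (\<Sum>j<k. ip (gs e G k j) g * gs e G k j i))"
    by (simp add: w_def gw_def g_def)
  have orth: "ip (gs e G k j) w = 0" if "j < k" for j
  proof -
    have "ip (gs e G k j) w = ip (gs e G k j) g - (\<Sum>m<k. ip (gs e G k m) g * ip (gs e G k j) (gs e G k m))"
      unfolding w by (rule ip_lin_right)
    also have "(\<Sum>m<k. ip (gs e G k m) g * ip (gs e G k j) (gs e G k m)) = ip (gs e G k j) g"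
    proof -
      have "(\<Sum>m<k. ip (gs e G k m) g * ip (gs e G k j) (gs e G k m)) = (\<Sum>m<k. if m = j then ip (gs e G k m) g else 0)"
        using IH that by (intro sum.cong refl) auto
      also have "\<dots> = ip (gs e G k j) g" using that by simp
      finally show ?thesis .
    qed
    finally show ?thesis by simp
  qed
  have nn: "ip w w = of_real ((gn e G k)^2)"
    by (simp add: ip_self gn_def w_def sum_nonneg)
  have new: "gs e G (Suc k) k = (\<lambda>i. w i / of_real (gn e G k))"
    by (simp add: gs_Suc' w_def)
  have old: "j < k \<Longrightarrow> gs e G (Suc k) j = gs e G k j" for j
    by (simp add: gs_Suc')
  have o1: "ip (gs e G k j) (gs e G (Suc k) k) = 0" if "j<k" for j
    using orth[OF that] by (simp add: new ip_scale_right)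
  have o2: "ip (gs e G (Suc k) k) (gs e G (Suc k) k) = 1"
    using nz by (simp add: new ip_scale_right ip_scale_left nn power2_eq_square)
  show ?case
  proof (intro allI impI)
    fix j l assume j: "j < Suc k" and l: "l < Suc k"
    show "ip (gs e G (Suc k) j) (gs e G (Suc k) l) = (if j = l then 1 else 0)"
    proof (cases "j = k"; cases "l = k")
      assume "j = k" "l = k" then show ?thesis using o2 by simp
    next
      assume "j = k" "l \<noteq> k" then show ?thesis using o1[of l] l old[of l]
        by (subst ip_cnj) simp
    next
      assume "j \<noteq> k" "l = k" then show ?thesis using o1[of j] j old[of j] by simp
    next
      assume "j \<noteq> k" "l \<noteq> k" then show ?thesis using IH j l old by simp
    qed
  qed
qed



definition Vv :: "complex^'d^'d \<Rightarrow> ('d::finite \<Rightarrow> complex) \<Rightarrow> 'd \<Rightarrow> complex" where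
  "Vv V u = (\<lambda>i. \<Sum>l\<in>UNIV. V$i$l * u l)"

lemma ip_unitary:
  assumes "unitary_mat V" shows "ip (Vv V u) (Vv V w) = ip u w"
proof -
  have VV: "(\<Sum>i\<in>UNIV. cnj (V$i$l) * V$i$m) = (if l = m then 1 else 0)" for l m
  proof -
    have "(cadj V ** V) $ l $ m = (if l = m then 1 else 0)"
      using assms by (simp add: unitary_mat_def mat_def)
    thus ?thesis by (simp add: matrix_matrix_mult_def)
  qed
  have "ip (Vv V u) (Vv V w) = (\<Sum>i\<in>UNIV. \<Sum>l\<in>UNIV. \<Sum>m\<in>UNIV. cnj (u l) * w m * (cnj (V$i$l) * V$i$m))"
    by (simp add: ip_def Vv_def sum_distrib_left sum_distrib_right mult_ac)
  also have "\<dots> = (\<Sum>l\<in>UNIV. \<Sum>m\<in>UNIV. cnj (u l) * w m * (\<Sum>i\<in>UNIV. cnj (V$i$l) * V$i$m))"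
    by (simp add: sum_distrib_left) (subst sum.swap, rule sum.cong[OF refl], subst sum.swap, simp)
  also have "\<dots> = (\<Sum>l\<in>UNIV. \<Sum>m\<in>UNIV. if l = m then cnj (u l) * w m else 0)"
    by (intro sum.cong refl) (simp add: VV)
  also have "\<dots> = ip u w" by (simp add: ip_def)
  finally show ?thesis .
qed

lemma Vv_norm:
  assumes "unitary_mat V" shows "(\<Sum>i\<in>UNIV. (cmod (Vv V w i))^2) = (\<Sum>i\<in>UNIV. (cmod (w i))^2)"
  using ip_unitary[OF assms, of w w] by (metis ip_self of_real_eq_iff)

lemma col_mult: "(\<lambda>l. (V ** G)$l$j) = Vv V (\<lambda>l. G$l$j)"
  by (simp add: Vv_def matrix_matrix_mult_def)

lemma mult_entry: "(V ** G)$i$j = Vv V (\<lambda>l. G$l$j) i"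
  by (simp add: Vv_def matrix_matrix_mult_def)

lemma Vv_lin: "Vv V (\<lambda>i. a i - (\<Sum>j\<in>J. c j * b j i)) = (\<lambda>i. Vv V a i - (\<Sum>j\<in>J. c j * Vv V (b j) i))"
  by (rule ext) (simp add: Vv_def ring_distribs sum_subtractf sum_distrib_left mult_ac, subst sum.swap, simp)

lemma Vv_div: "Vv V (\<lambda>i. a i / c) = (\<lambda>i. Vv V a i / c)"
  by (rule ext) (simp add: Vv_def sum_divide_distrib)

lemma Vv_zero: "Vv V (\<lambda>i. 0) = (\<lambda>i. 0)"
  by (simp add: Vv_def)

lemma gs_equiv:
  assumes "unitary_mat V"
  shows "gs e (V ** G) k j = Vv V (gs e G k j)"
proof (induction k arbitrary: j)
  case 0 then show ?case by (simp add: Vv_zero)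
next
  case (Suc k)
  have w: "gw e (V ** G) k = Vv V (gw e G k)"
    unfolding gw_def col_mult Suc ip_unitary[OF assms] Vv_lin by (simp add: mult_entry)
  have n: "gn e (V ** G) k = gn e G k"
    unfolding gn_def w Vv_norm[OF assms] ..
  show ?case by (simp add: gs_Suc' Suc w n Vv_div)
qed

lemma gw_equiv: "unitary_mat V \<Longrightarrow> gw e (V ** G) k = Vv V (gw e G k)"
  unfolding gw_def col_mult gs_equiv ip_unitary Vv_lin by (simp add: mult_entry)

lemma gn_equiv: "unitary_mat V \<Longrightarrow> gn e (V ** G) k = gn e G k"
  unfolding gn_def by (simp add: gw_equiv Vv_norm)



lemma borel_measurable_vec_lambda:
  fixes f :: "'a \<Rightarrow> 'b::euclidean_space ^'n"
  assumes "\<And>i. (\<lambda>x. f x $ i) \<in> borel_measurable M"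
  shows "f \<in> borel_measurable M"
proof (subst borel_measurable_euclidean_space, intro ballI)
  fix b :: "'b^'n" assume "b \<in> Basis"
  then obtain i u where b: "b = axis i u" and u: "u \<in> Basis" by (auto simp: Basis_vec_def)
  have "(\<lambda>x. f x $ i \<bullet> u) \<in> borel_measurable M" using assms[of i] by measurable
  thus "(\<lambda>x. f x \<bullet> b) \<in> borel_measurable M" by (simp add: b inner_axis)
qed

lemma meas_entry[measurable]: "(\<lambda>G::complex^'d^'d. G $ a $ b) \<in> borel_measurable borel"
  by (intro borel_measurable_continuous_onI continuous_intros continuous_on_component)

lemma meas_cnj[measurable]: "cnj \<in> borel_measurable borel"
  by (intro borel_measurable_continuous_onI continuous_intros)

lemma meas_entry2[measurable (raw)]: "f \<in> borel_measurable M \<Longrightarrow> (\<lambda>x. (f x :: complex^'d^'d) $ a $ b) \<in> borel_measurable M"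
  using measurable_compose[OF _ meas_entry] by blast

lemma meas_gs: "\<forall>j i. (\<lambda>G. gs e G k j i) \<in> borel_measurable borel"
proof (induction k)
  case 0 then show ?case by simp
next
  case (Suc k)
  have gsm: "(\<lambda>G. gs e G k j i) \<in> borel_measurable borel" for j i using Suc by blast
  have w[measurable]: "(\<lambda>G. gw e G k i) \<in> borel_measurable borel" for i
    unfolding gw_def ip_def
    by (intro borel_measurable_diff borel_measurable_sum borel_measurable_times gsm meas_entry
        measurable_compose[OF gsm meas_cnj])
  have n[measurable]: "(\<lambda>G. gn e G k) \<in> borel_measurable borel"
    unfolding gn_def by measurable
  show ?case
  proof (intro allI)
    fix j i
    show "(\<lambda>G. gs e G (Suc k) j i) \<in> borel_measurable borel"
    proof (cases "j = k")
      case True then show ?thesis by (simp add: gs_Suc') measurable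
    next
      case False then show ?thesis by (simp add: gs_Suc' gsm)
    qed
  qed
qed

lemma meas_gw[measurable]: "(\<lambda>G. gw e G k i) \<in> borel_measurable borel"
  unfolding gw_def ip_def
  by (intro borel_measurable_diff borel_measurable_sum borel_measurable_times meas_gs[rule_format] meas_entry
        measurable_compose[OF meas_gs[rule_format] meas_cnj])

lemma meas_gn[measurable]: "(\<lambda>G. gn e G k) \<in> borel_measurable borel"
  unfolding gn_def by measurable

definition Qmat :: "(nat \<Rightarrow> 'd::finite) \<Rightarrow> complex^'d^'d \<Rightarrow> complex^'d^'d" where
  "Qmat e G = (\<chi> i j. gs e G CARD('d) (inv_into {..<CARD('d)} e j) i)"

lemma meas_Qmat[measurable]: "Qmat e \<in> borel_measurable borel"
  unfolding Qmat_def
  by (intro borel_measurable_vec_lambda) (simp add: meas_gs)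

lemma Qmat_equiv: assumes "unitary_mat V" shows "Qmat e (V ** G) = V ** Qmat e G"
  unfolding Qmat_def gs_equiv[OF assms] by (simp add: Qmat_def gs_equiv vec_eq_iff matrix_matrix_mult_def Vv_def[abs_def])

lemma Qmat_unitary:
  assumes e: "bij_betw e {..<CARD('d)} (UNIV::'d::finite set)"
    and nz: "\<forall>m<CARD('d). gn e G m \<noteq> 0"
  shows "unitary_mat (Qmat e G)"
proof -
  let ?ei = "inv_into {..<CARD('d)} e"
  have ei: "?ei a < CARD('d)" for a using e
    by (meson bij_betw_def bij_betw_inv_into UNIV_I bij_betwE lessThan_iff)
  have einj: "?ei a = ?ei b \<longleftrightarrow> a = b" for a b using e
    by (metis bij_betw_inv_into_right UNIV_I)
  have o: "ip (gs e G CARD('d) (?ei a)) (gs e G CARD('d) (?ei b)) = (if a = b then 1 else 0)" for a b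
    using gs_orthonormal[OF nz] ei einj by auto
  have "cadj (Qmat e G) ** Qmat e G = mat 1"
    by (simp add: vec_eq_iff matrix_matrix_mult_def mat_def Qmat_def o[unfolded ip_def])
  thus ?thesis by (simp add: unitary_mat_left)
qed



definition Gv :: "complex^'d^'d \<Rightarrow> ('d::finite \<Rightarrow> complex) \<Rightarrow> 'd \<Rightarrow> complex" where
  "Gv G y = (\<lambda>i. \<Sum>l\<in>UNIV. G$i$l * y l)"

lemma Gv_comb:
  "(\<Sum>l\<in>UNIV. G$i$l * ((if l = a then 1 else 0) - (\<Sum>m\<in>J. c m * Y m l))) =
   G$i$a - (\<Sum>m\<in>J. c m * Gv G (Y m) i)"
proof -
  have 1: "(\<Sum>l\<in>UNIV. G$i$l * (if l = a then 1 else 0)) = G$i$a"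
  proof -
    have "(\<Sum>l\<in>UNIV. G$i$l * (if l = a then 1 else 0)) = (\<Sum>l\<in>UNIV. if l = a then G$i$a else 0)"
      by (intro sum.cong) auto
    thus ?thesis by simp
  qed
  have 2: "(\<Sum>l\<in>UNIV. G$i$l * (\<Sum>m\<in>J. c m * Y m l)) = (\<Sum>m\<in>J. c m * Gv G (Y m) i)"
    by (simp add: Gv_def sum_distrib_left sum_distrib_right mult_ac) (rule sum.swap)
  show ?thesis by (simp add: right_diff_distrib sum_subtractf 1 2)
qed

lemma gs_rep:
  "\<forall>j<k. \<exists>y. gs e G k j = Gv G y \<and> (\<forall>l. l \<notin> e ` {..j} \<longrightarrow> y l = 0)"
proof (induction k)
  case 0 then show ?case by simp
next
  case (Suc k)
  from Suc obtain Y where Y: "\<And>j. j < k \<Longrightarrow> gs e G k j = Gv G (Y j) \<and> (\<forall>l. l \<notin> e ` {..j} \<longrightarrow> Y j l = 0)"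
    by metis
  define c where "c m = ip (gs e G k m) (\<lambda>l. G$l$(e k))" for m
  define y where "y l = ((if l = e k then 1 else 0) - (\<Sum>m<k. c m * Y m l)) / of_real (gn e G k)" for l
  have "gs e G (Suc k) k = Gv G y"
  proof (rule ext)
    fix i
    have "gs e G (Suc k) k i = (G$i$(e k) - (\<Sum>m<k. c m * Gv G (Y m) i)) / of_real (gn e G k)"
      by (simp add: gs_Suc' gw_def c_def Y)
    also have "\<dots> = Gv G y i"
    proof -
      have "Gv G y i = (\<Sum>l\<in>UNIV. G$i$l * ((if l = e k then 1 else 0) - (\<Sum>m<k. c m * Y m l))) / of_real (gn e G k)"
        unfolding Gv_def y_def by (simp add: sum_divide_distrib)
      thus ?thesis unfolding Gv_comb by simp
    qed
    finally show "gs e G (Suc k) k i = Gv G y i" .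
  qed
  moreover have "\<forall>l. l \<notin> e ` {..k} \<longrightarrow> y l = 0"
  proof (intro allI impI)
    fix l assume l: "l \<notin> e ` {..k}"
    have "Y m l = 0" if "m < k" for m
    proof -
      have "l \<notin> e ` {..m}" using l that by auto
      thus ?thesis using Y[OF that] by blast
    qed
    thus "y l = 0" using l by (auto simp: y_def intro!: sum.neutral)
  qed
  ultimately show ?case using Y by (auto simp: gs_Suc' less_Suc_eq)
qed

lemma det_nondeg:
  fixes G :: "complex^'d^'d::finite"
  assumes det: "det G \<noteq> 0" and e: "inj_on e {..<CARD('d)}"
  shows "\<forall>m<CARD('d). gn e G m \<noteq> 0"
proof (intro allI impI notI)
  fix m assume m: "m < CARD('d)" and z: "gn e G m = 0"
  have "(\<Sum>i\<in>UNIV. (cmod (gw e G m i))^2) = 0" using z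
    by (simp add: gn_def)
  hence w0: "gw e G m i = 0" for i
    by (subst (asm) sum_nonneg_eq_0_iff) auto
  from gs_rep[of m e G] obtain Y where Y: "\<And>j. j < m \<Longrightarrow> gs e G m j = Gv G (Y j) \<and> (\<forall>l. l \<notin> e ` {..j} \<longrightarrow> Y j l = 0)"
    by metis
  define c where "c j = ip (gs e G m j) (\<lambda>l. G$l$(e m))" for j
  define x where "x = (\<chi> l. (if l = e m then 1 else 0) - (\<Sum>j<m. c j * Y j l))"
  have "G *v x = 0"
  proof (subst vec_eq_iff, intro allI)
    fix i
    have "0 = G$i$(e m) - (\<Sum>j<m. c j * Gv G (Y j) i)"
      using w0[of i] by (simp add: gw_def c_def Y)
    also have "\<dots> = (G *v x) $ i"
      unfolding x_def matrix_vector_mult_def by (simp add: Gv_comb)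
    finally show "(G *v x) $ i = 0 $ i" by simp
  qed
  moreover have "x $ e m = 1"
  proof -
    have "Y j (e m) = 0" if "j < m" for j
    proof -
      have "e m \<notin> e ` {..j}" using e m that
        by (auto simp: inj_on_def) (metis le_less_trans lessThan_iff less_imp_le_nat order_less_irrefl)
      thus ?thesis using Y[OF that] by blast
    qed
    thus ?thesis by (simp add: x_def)
  qed
  moreover have "invertible G" using det invertible_det_nz by blast
  then obtain B where "B ** G = mat 1" by (meson invertible_left_inverse)
  ultimately have "x = 0"
    by (metis matrix_vector_mul_assoc matrix_vector_mul_lid matrix_vector_mult_0_right)
  with \<open>x $ e m = 1\<close> show False by simp
qed



definition Lm :: "('d::finite \<times> 'd \<times> bool \<Rightarrow> 'k::finite) \<Rightarrow> real^'k \<Rightarrow> complex^'d^'d" where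
  "Lm b x = (\<chi> i j. Complex (x $ b (i,j,False)) (x $ b (i,j,True)))"

definition Lm' :: "('d::finite \<times> 'd \<times> bool \<Rightarrow> 'k::finite) \<Rightarrow> complex^'d^'d \<Rightarrow> real^'k" where
  "Lm' b G = (\<chi> k. case inv b k of (i,j,t) \<Rightarrow> if t then Im (G$i$j) else Re (G$i$j))"

lemma Lm_Lm':
  assumes "bij b" shows "Lm b (Lm' b G) = G"
  using assms by (simp add: Lm_def Lm'_def vec_eq_iff complex_eq_iff bij_is_inj inv_f_f)

lemma Lm'_Lm:
  assumes "bij b" shows "Lm' b (Lm b x) = x"
proof -
  have "x $ k = (case inv b k of (i,j,t) \<Rightarrow> if t then x $ b (i, j, True) else x $ b (i, j, False))" for k
  proof -
    obtain i j t where "inv b k = (i,j,t)" by (cases "inv b k") auto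
    moreover have "b (inv b k) = k" using assms by (simp add: bij_is_surj surj_f_inv_f)
    ultimately show ?thesis by (cases t) auto
  qed
  thus ?thesis by (simp add: Lm_def Lm'_def vec_eq_iff split: prod.splits)
qed

lemma inner_cmat: "(G::complex^'d^'d) \<bullet> H = (\<Sum>i\<in>UNIV. \<Sum>j\<in>UNIV. Re (G$i$j) * Re (H$i$j) + Im (G$i$j) * Im (H$i$j))"
  by (simp add: inner_vec_def inner_complex_def)

lemma inner_Lm:
  assumes "bij b" shows "Lm b x \<bullet> Lm b y = x \<bullet> y"
proof -
  have "Lm b x \<bullet> Lm b y = (\<Sum>i\<in>UNIV. \<Sum>j\<in>UNIV. \<Sum>t\<in>UNIV. x $ b (i,j,t) * y $ b (i,j,t))"
    by (simp add: inner_cmat Lm_def UNIV_bool add.commute)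
  also have "\<dots> = (\<Sum>p\<in>UNIV. x $ b p * y $ b p)"
    by (simp add: sum.cartesian_product UNIV_Times_UNIV[symmetric] del: UNIV_Times_UNIV)
  also have "\<dots> = (\<Sum>k\<in>UNIV. x $ k * y $ k)"
    using assms by (rule sum.reindex_bij_betw)
  also have "\<dots> = x \<bullet> y" by (simp add: inner_vec_def)
  finally show ?thesis .
qed

lemma linear_Lm: "linear (Lm b)"
  by (rule linearI) (simp_all add: Lm_def vec_eq_iff complex_eq_iff)

lemma linear_Lm': "linear (Lm' b)"
  by (rule linearI) (simp_all add: Lm'_def vec_eq_iff split: prod.splits)

lemma inner_Lm':
  assumes "bij b" shows "Lm' b G \<bullet> Lm' b H = G \<bullet> H"
  using inner_Lm[OF assms, of "Lm' b G" "Lm' b H"] by (simp add: Lm_Lm' assms)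

lemma norm_Lm: "bij b \<Longrightarrow> norm (Lm b x) = norm x"
  by (simp add: norm_eq_sqrt_inner inner_Lm)

lemma inner_cmat_ip: "(G::complex^'d^'d) \<bullet> H = Re (\<Sum>j\<in>UNIV. ip (\<lambda>l. G$l$j) (\<lambda>l. H$l$j))"
  unfolding inner_cmat ip_def Re_sum
  by (subst sum.swap) simp

lemma inner_unitary:
  fixes G H :: "complex^'d::finite^'d"
  assumes "unitary_mat V" shows "(V ** G) \<bullet> (V ** H) = G \<bullet> H"
  by (simp add: inner_cmat_ip col_mult ip_unitary[OF assms])

lemma linear_mmult: "linear (\<lambda>G::complex^'d^'d. V ** G)"
  by (rule linearI) (simp_all add: vec_eq_iff matrix_matrix_mult_def sum.distrib distrib_left scaleR_sum_right)

definition TV :: "('d::finite \<times> 'd \<times> bool \<Rightarrow> 'k::finite) \<Rightarrow> complex^'d^'d \<Rightarrow> real^'k \<Rightarrow> real^'k" where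
  "TV b V x = Lm' b (V ** Lm b x)"

lemma orth_TV:
  assumes "bij b" "unitary_mat V"
  shows "orthogonal_transformation (TV b V)"
  unfolding orthogonal_transformation_def
proof
  show "linear (TV b V)" unfolding TV_def[abs_def]
    using linear_compose[OF linear_compose[OF linear_Lm linear_mmult] linear_Lm']
    by (simp add: o_def)
  show "\<forall>v w. TV b V v \<bullet> TV b V w = v \<bullet> w"
    by (simp add: TV_def inner_Lm' inner_unitary inner_Lm assms)
qed

lemma Lm_TV: "bij b \<Longrightarrow> Lm b (TV b V x) = V ** Lm b x"
  by (simp add: TV_def Lm_Lm')

lemma TV_inv: "bij b \<Longrightarrow> unitary_mat V \<Longrightarrow> TV b (cadj V) (TV b V x) = x"
  by (simp add: TV_def Lm_Lm' Lm'_Lm matrix_mul_assoc unitary_mat_def)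

lemma continuous_Lm: "continuous_on S (Lm b)"
  by (rule linear_continuous_on) (simp add: linear_conv_bounded_linear[symmetric] linear_Lm)

lemma meas_Lm[measurable]: "Lm b \<in> borel_measurable borel"
  by (intro borel_measurable_continuous_onI continuous_Lm)



lemma emeasure_orth_image:
  fixes T :: "real^'n::{finite,wellorder} \<Rightarrow> real^'n::{finite,wellorder}"
  assumes T: "orthogonal_transformation T" and S: "S \<in> sets borel" "bounded S"
    and TS: "T ` S \<in> sets borel"
  shows "emeasure lborel (T ` S) = emeasure lborel S"
proof -
  have Sl: "S \<in> lmeasurable"
    using S by (intro bounded_set_imp_lmeasurable) (auto intro: sets_completionI_sets)
  have TSl: "T ` S \<in> lmeasurable" by (rule measurable_orthogonal_image[OF T Sl])
  have "emeasure lborel (T ` S) = emeasure lebesgue (T ` S)" using TS by simp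
  also have "\<dots> = ennreal (measure lebesgue (T ` S))" using TSl by (rule emeasure_eq_measure2)
  also have "\<dots> = ennreal (measure lebesgue S)" by (simp add: measure_orthogonal_image[OF T Sl])
  also have "\<dots> = emeasure lebesgue S" using Sl by (rule emeasure_eq_measure2[symmetric])
  also have "\<dots> = emeasure lborel S" using S by simp
  finally show ?thesis .
qed

lemma continuous_on_det[continuous_intros]:
  fixes f :: "'a::topological_space \<Rightarrow> complex^'d::finite^'d"
  assumes "continuous_on S f"
  shows "continuous_on S (\<lambda>x. det (f x))"
  unfolding det_def
  by (intro continuous_intros continuous_on_component assms)

lemma unitary_set_borel[measurable]: "{U::complex^'d::finite^'d. unitary_mat U} \<in> sets borel"
proof -
  have "closed {U::complex^'d^'d. cadj U ** U = mat 1}"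
    by (intro closed_Collect_eq continuous_intros continuous_on_id)
  moreover have "{U::complex^'d^'d. unitary_mat U} = {U::complex^'d^'d. cadj U ** U = mat 1}"
    by (simp add: unitary_mat_left)
  ultimately show ?thesis by simp
qed

lemma mmult_meas[measurable]: "(\<lambda>U::complex^'d::finite^'d. (V::complex^'d^'d) ** U) \<in> borel_measurable borel"
  by (intro borel_measurable_continuous_onI continuous_on_mat_mult[OF continuous_on_const continuous_on_id])

theorem haar_exists: "\<exists>M::(complex^'d::finite^'d) measure. is_haar M"
proof -
  obtain e where e: "bij_betw e {..<CARD('d)} (UNIV::'d set)"
    using ex_bij_betw_nat_finite[of "UNIV::'d set"] by (auto simp: atLeast0LessThan)
  have "card (UNIV::('d\<times>'d\<times>bool) set) = card (UNIV::(('d\<times>'d) bit0) set)"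
    by (simp add: card_UNIV_bool)
  then obtain b :: "'d\<times>'d\<times>bool \<Rightarrow> ('d\<times>'d) bit0" where b0: "bij_betw b UNIV UNIV"
    using finite_same_card_bij[of "UNIV::('d\<times>'d\<times>bool) set" "UNIV::(('d\<times>'d) bit0) set"] by auto
  hence b: "bij b" by simp
  define B where "B = {x::real^(('d\<times>'d) bit0). norm x < 1 \<and> (\<forall>m<CARD('d). gn e (Lm b x) m \<noteq> 0)}"
  have B_meas[measurable]: "B \<in> sets borel"
    unfolding B_def by measurable
  have B_bdd: "bounded B" unfolding B_def bounded_iff by (intro exI[of _ 1]) auto
  define Z where "Z = {x::real^(('d\<times>'d) bit0). norm x < 1} \<inter> {x. det (Lm b x) \<noteq> 0}"
  have ZB: "Z \<subseteq> B"
    unfolding Z_def B_def using det_nondeg e by (auto simp: bij_betw_def)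
  have Zopen: "open Z"
    unfolding Z_def
    by (intro open_Int open_Collect_less open_Collect_neq continuous_intros continuous_Lm)
  define c where "c = 1 / (norm (mat 1 :: complex^'d^'d) + 1)"
  have n0: "0 \<le> norm (mat 1 :: complex^'d^'d)" by simp
  have c: "c > 0" "c * norm (mat 1 :: complex^'d^'d) < 1"
    unfolding c_def using n0 by (simp_all add: add_nonneg_pos)
  define x0 where "x0 = Lm' b (c *\<^sub>R mat 1)"
  have Lx0: "Lm b x0 = mat (of_real c)"
    by (simp add: x0_def Lm_Lm' b vec_eq_iff mat_def of_real_def)
  have "norm x0 = norm (Lm b x0)" by (simp add: norm_Lm b)
  also have "\<dots> = c * norm (mat 1 :: complex^'d^'d)"
    using c(1) by (simp add: x0_def Lm_Lm' b)
  finally have nx0: "norm x0 < 1" using c by simp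
  have "det (mat (of_real c) :: complex^'d^'d) = of_real c ^ CARD('d)"
    by (subst det_diagonal) (auto simp: mat_def)
  hence "det (Lm b x0) \<noteq> 0" using c by (simp add: Lx0)
  hence "x0 \<in> Z" using nx0 by (simp add: Z_def)
  then obtain r where r: "r > 0" "ball x0 r \<subseteq> Z" using Zopen open_contains_ball by blast
  have "0 < emeasure lborel (ball x0 r)" using r by (simp add: emeasure_ball)
  also have "\<dots> \<le> emeasure lborel B"
    using r ZB by (intro emeasure_mono) auto
  finally have Bpos: "emeasure lborel B \<noteq> 0" by simp
  have Bfin: "emeasure lborel B \<noteq> \<infinity>"
  proof -
    have "B \<subseteq> ball 0 1" by (auto simp: B_def)
    hence "emeasure lborel B \<le> emeasure lborel (ball (0::real^(('d\<times>'d) bit0)) 1)"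
      by (intro emeasure_mono) auto
    thus ?thesis using emeasure_lborel_ball_finite[of "0::real^(('d\<times>'d) bit0)" 1] by (auto simp: top_unique)
  qed
  define P where "P = uniform_measure lborel B"
  have probP: "prob_space P" unfolding P_def using Bpos Bfin by (rule prob_space_uniform_measure)
  have setsP[simp]: "sets P = sets borel" "space P = UNIV" by (simp_all add: P_def)
  have [measurable_cong]: "sets P = sets borel" by simp

  have TVB: "TV b V -` B = B" if V: "unitary_mat V" for V
  proof -
    have "TV b V x \<in> B \<longleftrightarrow> x \<in> B" for x
      using orth_TV[OF b V] by (simp add: B_def orthogonal_transformation_norm Lm_TV b gn_equiv V)
    thus ?thesis by auto
  qed
  have TVmeas[measurable]: "TV b V \<in> borel_measurable borel" for V
  proof -
    have "linear (TV b V)" unfolding TV_def[abs_def]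
      using linear_compose[OF linear_compose[OF linear_Lm linear_mmult] linear_Lm']
      by (simp add: o_def)
    thus ?thesis
      by (intro borel_measurable_continuous_onI linear_continuous_on)
         (simp add: linear_conv_bounded_linear[symmetric])
  qed
  have Pinv: "distr P borel (TV b V) = P" if V: "unitary_mat V" for V
  proof (rule measure_eqI)
    show "sets (distr P borel (TV b V)) = sets P" by simp
    fix A assume "A \<in> sets (distr P borel (TV b V))"
    hence A[measurable]: "A \<in> sets borel" by simp
    let ?T = "TV b V" and ?T' = "TV b (cadj V)"
    have V': "unitary_mat (cadj V)" using V by (rule unitary_cadj)
    have pre: "?T -` (B \<inter> A) = ?T' ` (B \<inter> A)"
    proof
      show "?T -` (B \<inter> A) \<subseteq> ?T' ` (B \<inter> A)"
        using TV_inv[OF b V] by (auto intro!: image_eqI)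
      show "?T' ` (B \<inter> A) \<subseteq> ?T -` (B \<inter> A)"
        using TV_inv[OF b V', simplified] by auto
    qed
    have TA: "?T -` A \<in> sets borel" using measurable_sets[OF TVmeas A] by simp
    have "emeasure (distr P borel ?T) A = emeasure P (?T -` A)"
      by (subst emeasure_distr) (auto simp: measurable_cong_sets[OF setsP(1) refl] TVmeas)
    also have "\<dots> = emeasure lborel (B \<inter> ?T -` A) / emeasure lborel B"
      unfolding P_def by (subst emeasure_uniform_measure) (auto simp: TA)
    also have "B \<inter> ?T -` A = ?T -` (B \<inter> A)" using TVB[OF V] by auto
    also have "\<dots> = ?T' ` (B \<inter> A)" by (rule pre)
    also have "emeasure lborel (?T' ` (B \<inter> A)) = emeasure lborel (B \<inter> A)"
    proof (rule emeasure_orth_image[OF orth_TV[OF b V']])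
      show "B \<inter> A \<in> sets borel" by simp
      show "bounded (B \<inter> A)" using B_bdd by (rule bounded_subset) auto
      have "?T -` (B \<inter> A) \<in> sets borel" using measurable_sets[OF TVmeas, of "B \<inter> A"] by simp
      thus "?T' ` (B \<inter> A) \<in> sets borel" using pre by (simp only:)
    qed
    also have "emeasure lborel (B \<inter> A) / emeasure lborel B = emeasure P A"
      unfolding P_def by (subst emeasure_uniform_measure) auto
    finally show "emeasure (distr P borel ?T) A = emeasure P A" .
  qed
  define M where "M = distr P borel (\<lambda>x. Qmat e (Lm b x))"
  have "is_haar M"
    unfolding is_haar_def
  proof (intro conjI allI impI)
    show "prob_space M" unfolding M_def
      by (intro prob_space.prob_space_distr probP) measurable
    show "sets M = sets borel" by (simp add: M_def)
    have "AE x in P. unitary_mat (Qmat e (Lm b x))"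
      unfolding P_def
      by (rule AE_uniform_measureI) (auto simp: B_def intro!: Qmat_unitary e)
    thus "AE U in M. unitary_mat U" unfolding M_def
      by (subst AE_distr_iff) auto
    fix V :: "complex^'d^'d" assume V: "unitary_mat V"
    have "distr M borel ((**) V) = distr P borel ((**) V \<circ> (\<lambda>x. Qmat e (Lm b x)))"
      unfolding M_def by (rule distr_distr) measurable
    also have "(**) V \<circ> (\<lambda>x. Qmat e (Lm b x)) = (\<lambda>x. Qmat e (Lm b x)) \<circ> TV b V"
      by (rule ext) (simp add: Qmat_equiv[OF V] Lm_TV b)
    also have "distr P borel \<dots> = distr (distr P borel (TV b V)) borel (\<lambda>x. Qmat e (Lm b x))"
      by (rule distr_distr[symmetric]) measurable
    also have "\<dots> = M" by (simp add: Pinv[OF V] M_def)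
    finally show "distr M borel ((**) V) = M" .
  qed
  thus ?thesis by blast
qed

lemma is_haar_haar: "is_haar (haar :: (complex^'d::finite^'d) measure)"
  unfolding haar_def using haar_exists by (rule someI_ex)



lemma haar_prob: "prob_space (haar :: (complex^'d::finite^'d) measure)"
  using is_haar_haar unfolding is_haar_def by blast

lemma sets_haar[measurable_cong, simp]: "sets (haar :: (complex^'d::finite^'d) measure) = sets borel"
  using is_haar_haar unfolding is_haar_def by blast

lemma space_haar[simp]: "space (haar :: (complex^'d::finite^'d) measure) = UNIV"
  using sets_eq_imp_space_eq[OF sets_haar] by simp

lemma haar_AE: "AE U in (haar :: (complex^'d::finite^'d) measure). unitary_mat U"
  using is_haar_haar unfolding is_haar_def by blast

lemma haar_left: "unitary_mat V \<Longrightarrow> distr (haar :: (complex^'d::finite^'d) measure) borel ((**) V) = haar"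
  using is_haar_haar unfolding is_haar_def by blast

lemma meas_haar_iff: "f \<in> borel_measurable (haar :: (complex^'d::finite^'d) measure) \<longleftrightarrow> f \<in> borel_measurable borel"
  by (simp add: measurable_cong_sets[OF sets_haar refl])

lemma left_int:
  fixes f :: "complex^'d::finite^'d \<Rightarrow> complex"
  assumes V: "unitary_mat V" and f: "f \<in> borel_measurable borel"
  shows "(\<integral>U. f (V ** U) \<partial>haar) = (\<integral>U. f U \<partial>haar)"
proof -
  have "(\<integral>U. f U \<partial>haar) = (\<integral>U. f U \<partial>distr haar borel ((**) V))" by (simp add: haar_left V)
  also have "\<dots> = (\<integral>U. f (V ** U) \<partial>haar)"
    by (rule integral_distr) (simp_all add: f meas_haar_iff)
  finally show ?thesis ..
qed

lemma mmult2_meas[measurable]: "(\<lambda>p::(complex^'d::finite^'d) \<times> (complex^'d^'d). fst p ** snd p) \<in> borel_measurable borel"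
  by (intro borel_measurable_continuous_onI continuous_on_mat_mult continuous_on_fst continuous_on_snd continuous_on_id)

lemma cadj_meas[measurable]: "(cadj :: complex^'d::finite^'d \<Rightarrow> _) \<in> borel_measurable borel"
  by (intro borel_measurable_continuous_onI continuous_on_cadj[OF continuous_on_id, unfolded id_def])

lemma mmult_right_meas[measurable]: "(\<lambda>U::complex^'d::finite^'d. U ** (W::complex^'d^'d)) \<in> borel_measurable borel"
  by (intro borel_measurable_continuous_onI continuous_on_mat_mult[OF continuous_on_id continuous_on_const])

lemma pred_unitary[measurable]: "Measurable.pred borel (\<lambda>U::complex^'d::finite^'d. unitary_mat U)"
  using pred_sets1[where P=unitary_mat and N=borel and f="\<lambda>x. x" and M=borel] unitary_set_borel by simp

lemma haar_UNIV[simp]: "measure (haar :: (complex^'d::finite^'d) measure) UNIV = 1"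
  using prob_space.prob_space[OF haar_prob] by simp

interpretation hh: pair_prob_space "haar :: (complex^'d::finite^'d) measure" "haar :: (complex^'d::finite^'d) measure"
  by (simp add: pair_prob_space_def pair_sigma_finite_def haar_prob prob_space_imp_sigma_finite)

lemma inv_int:
  fixes f :: "complex^'d::finite^'d \<Rightarrow> complex"
  assumes f[measurable]: "f \<in> borel_measurable borel" and bnd: "\<And>x. norm (f x) \<le> C"
  shows "(\<integral>U. f U \<partial>haar) = (\<integral>V. f (cadj V) \<partial>haar)"
proof -
  interpret prob_space "haar :: (complex^'d^'d) measure" by (rule haar_prob)
  let ?H = "haar :: (complex^'d^'d) measure"
  have g[measurable]: "(\<lambda>p::(complex^'d^'d)\<times>(complex^'d^'d). f (cadj (fst p) ** snd p)) \<in> borel_measurable borel"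
  proof -
    have h1: "(\<lambda>p::(complex^'d^'d)\<times>(complex^'d^'d). (cadj (fst p), snd p)) \<in> borel_measurable borel"
      by (intro borel_measurable_continuous_onI continuous_on_Pair continuous_on_cadj continuous_on_fst continuous_on_snd continuous_on_id)
    have "(\<lambda>p::(complex^'d^'d)\<times>(complex^'d^'d). cadj (fst p) ** snd p) \<in> borel_measurable borel"
      using measurable_compose[OF h1 mmult2_meas] by simp
    from measurable_compose[OF this f] show ?thesis by simp
  qed
  have g2: "(\<lambda>p::(complex^'d^'d)\<times>(complex^'d^'d). f (cadj (snd p) ** fst p)) \<in> borel_measurable borel"
  proof -
    have h1: "(\<lambda>p::(complex^'d^'d)\<times>(complex^'d^'d). (cadj (snd p), fst p)) \<in> borel_measurable borel"
      by (intro borel_measurable_continuous_onI continuous_on_Pair continuous_on_cadj continuous_on_fst continuous_on_snd continuous_on_id)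
    have "(\<lambda>p::(complex^'d^'d)\<times>(complex^'d^'d). cadj (snd p) ** fst p) \<in> borel_measurable borel"
      using measurable_compose[OF h1 mmult2_meas] by simp
    from measurable_compose[OF this f] show ?thesis by simp
  qed
  have "(\<integral>U. f U \<partial>?H) = (\<integral>V. (\<integral>U. f U \<partial>?H) \<partial>?H)" by simp
  also have "\<dots> = (\<integral>V. (\<integral>U. f (cadj V ** U) \<partial>?H) \<partial>?H)"
  proof (rule integral_cong_AE)
    show "AE V in ?H. (\<integral>U. f U \<partial>?H) = (\<integral>U. f (cadj V ** U) \<partial>?H)"
      using haar_AE by eventually_elim (simp add: left_int unitary_cadj)
    show "(\<lambda>V. \<integral>U. f U \<partial>?H) \<in> borel_measurable ?H" by simp
    show "(\<lambda>V. \<integral>U. f (cadj V ** U) \<partial>?H) \<in> borel_measurable ?H"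
      using g by (intro hh.M1.borel_measurable_lebesgue_integral) (simp add: case_prod_beta' measurable_cong_sets[OF sets_pair_measure_cong[OF sets_haar sets_haar] refl] borel_prod)
  qed
  also have "\<dots> = (\<integral>U. (\<integral>V. f (cadj V ** U) \<partial>?H) \<partial>?H)"
  proof (rule hh.Fubini_integral)
    show "integrable (?H \<Otimes>\<^sub>M ?H) (\<lambda>(U, V). f (cadj V ** U))"
    proof (rule hh.P.integrable_const_bound[where B=C])
      show "AE x in ?H \<Otimes>\<^sub>M ?H. norm (case x of (U, V) \<Rightarrow> f (cadj V ** U)) \<le> C"
        by (auto simp: bnd split: prod.splits)
      show "(\<lambda>(U, V). f (cadj V ** U)) \<in> borel_measurable (?H \<Otimes>\<^sub>M ?H)"
        using g2 by (simp add: case_prod_beta' measurable_cong_sets[OF sets_pair_measure_cong[OF sets_haar sets_haar] refl] borel_prod)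
    qed
  qed
  also have "\<dots> = (\<integral>U. (\<integral>V. f (cadj V) \<partial>?H) \<partial>?H)"
  proof (rule integral_cong_AE)
    show "AE U in ?H. (\<integral>V. f (cadj V ** U) \<partial>?H) = (\<integral>V. f (cadj V) \<partial>?H)"
      using haar_AE
    proof eventually_elim
      fix U :: "complex^'d^'d" assume U: "unitary_mat U"
      have "(\<integral>V. f (cadj V ** U) \<partial>?H) = (\<integral>V. f (cadj (U ** V) ** U) \<partial>?H)"
        by (rule left_int[OF U, of "\<lambda>V. f (cadj V ** U)", symmetric]) measurable
      also have "\<dots> = (\<integral>V. f (cadj V) \<partial>?H)"
        using U by (simp add: cadj_mult matrix_mul_assoc[symmetric] unitary_mat_def)
      finally show "(\<integral>V. f (cadj V ** U) \<partial>?H) = (\<integral>V. f (cadj V) \<partial>?H)" .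
    qed
    show "(\<lambda>U. \<integral>V. f (cadj V ** U) \<partial>?H) \<in> borel_measurable ?H"
      using g2
        by (intro hh.M1.borel_measurable_lebesgue_integral) (simp add: case_prod_beta' measurable_cong_sets[OF sets_pair_measure_cong[OF sets_haar sets_haar] refl] borel_prod)
    show "(\<lambda>U. \<integral>V. f (cadj V) \<partial>?H) \<in> borel_measurable ?H" by simp
  qed
  also have "\<dots> = (\<integral>V. f (cadj V) \<partial>?H)" by simp
  finally show ?thesis .
qed

lemma right_int_bdd:
  fixes f :: "complex^'d::finite^'d \<Rightarrow> complex"
  assumes W: "unitary_mat W" and f[measurable]: "f \<in> borel_measurable borel" and bnd: "\<And>x. norm (f x) \<le> C"
  shows "(\<integral>U. f (U ** W) \<partial>haar) = (\<integral>U. f U \<partial>haar)"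
proof -
  have "(\<integral>U. f (U ** W) \<partial>haar) = (\<integral>V. f (cadj V ** W) \<partial>haar)"
    by (rule inv_int[where C=C]) (simp_all add: bnd)
  also have "\<dots> = (\<integral>V. f (cadj (cadj W ** V)) \<partial>haar)"
    by (simp add: cadj_mult)
  also have "\<dots> = (\<integral>V. f (cadj V) \<partial>haar)"
    by (rule left_int[OF unitary_cadj[OF W], of "\<lambda>V. f (cadj V)"]) measurable
  also have "\<dots> = (\<integral>U. f U \<partial>haar)"
    by (rule inv_int[symmetric, where C=C]) (simp_all add: bnd)
  finally show ?thesis .
qed

lemma right_int:
  fixes f :: "complex^'d::finite^'d \<Rightarrow> complex"
  assumes W: "unitary_mat W" and f[measurable]: "f \<in> borel_measurable borel"
    and bnd: "\<And>x. unitary_mat x \<Longrightarrow> norm (f x) \<le> C"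
  shows "(\<integral>U. f (U ** W) \<partial>haar) = (\<integral>U. f U \<partial>haar)"
proof -
  define g where "g x = (if unitary_mat x then f x else 0)" for x
  have g[measurable]: "g \<in> borel_measurable borel" unfolding g_def by measurable
  have gb: "norm (g x) \<le> max C 0" for x by (auto simp: g_def bnd intro: le_max_iff_disj[THEN iffD2])
  have "(\<integral>U. f (U ** W) \<partial>haar) = (\<integral>U. g (U ** W) \<partial>haar)"
    by (rule integral_cong_AE) (use haar_AE in \<open>auto simp: meas_haar_iff g_def unitary_mult W elim!: eventually_mono\<close>)
  also have "\<dots> = (\<integral>U. g U \<partial>haar)" by (rule right_int_bdd[OF W g gb])
  also have "\<dots> = (\<integral>U. f U \<partial>haar)"
    by (rule integral_cong_AE) (use haar_AE in \<open>auto simp: meas_haar_iff g_def elim!: eventually_mono\<close>)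
  finally show ?thesis .
qed



definition AU :: "complex^'d::finite^'d \<Rightarrow> complex^'d^'d \<Rightarrow> complex^'d^'d" where
  "AU X U = cadj U ** X ** U"

definition KK :: "complex^'d::finite^'d \<Rightarrow> 'd \<Rightarrow> 'd \<Rightarrow> 'd \<Rightarrow> 'd \<Rightarrow> complex" where
  "KK X a b c e = (\<integral>U. AU X U $a$b * cnj (AU X U $c$e) \<partial>haar)"

lemma conj_entry: "(cadj W ** Y ** W) $ a $ b = (\<Sum>p\<in>UNIV. \<Sum>q\<in>UNIV. cnj (W$p$a) * Y$p$q * W$q$b)"
  by (simp add: matrix_matrix_mult_def sum_distrib_right) (rule sum.swap)

lemma AU_bound:
  assumes U: "unitary_mat U"
  shows "cmod (AU X U $a$b) \<le> (\<Sum>p\<in>UNIV. \<Sum>q\<in>UNIV. cmod (X$p$q))"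
proof -
  have "cmod (AU X U $a$b) \<le> (\<Sum>p\<in>UNIV. cmod (\<Sum>q\<in>UNIV. cnj (U$p$a) * X$p$q * U$q$b))"
    unfolding AU_def conj_entry by (rule norm_sum)
  also have "\<dots> \<le> (\<Sum>p\<in>UNIV. \<Sum>q\<in>UNIV. cmod (cnj (U$p$a) * X$p$q * U$q$b))"
    by (intro sum_mono norm_sum)
  also have "\<dots> \<le> (\<Sum>p\<in>UNIV. \<Sum>q\<in>UNIV. cmod (X$p$q))"
  proof (intro sum_mono)
    fix p q
    have "cmod (cnj (U$p$a) * X$p$q * U$q$b) = cmod (U$p$a) * cmod (X$p$q) * cmod (U$q$b)"
      by (simp add: norm_mult)
    also have "\<dots> \<le> 1 * cmod (X$p$q) * 1"
      using unitary_entry_le[OF U] by (intro mult_mono) auto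
    finally show "cmod (cnj (U$p$a) * X$p$q * U$q$b) \<le> cmod (X$p$q)" by simp
  qed
  finally show ?thesis .
qed

lemma AU_meas[measurable]: "(\<lambda>U. AU X U $a$b) \<in> borel_measurable borel"
  unfolding AU_def
  by (intro borel_measurable_continuous_onI continuous_on_component continuous_on_mat_mult
      continuous_on_cadj continuous_on_id continuous_on_const)

lemma f_meas[measurable]: "(\<lambda>U. AU X U $a$b * cnj (AU X U $c$e)) \<in> borel_measurable borel"
  by measurable

lemma f_bound: "unitary_mat U \<Longrightarrow> norm (AU X U $a$b * cnj (AU X U $c$e)) \<le> (\<Sum>p\<in>UNIV. \<Sum>q\<in>UNIV. cmod (X$p$q))^2"
  by (simp add: norm_mult power2_eq_square) (intro mult_mono AU_bound, auto intro!: sum_nonneg)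

lemma f_integrable: "integrable haar (\<lambda>U. AU X U $a$b * cnj (AU X U $c$e))"
proof -
  show ?thesis
    by (rule hh.M1.integrable_const_bound[where B="(\<Sum>p\<in>UNIV. \<Sum>q\<in>UNIV. cmod (X$p$q))^2"])
       (use haar_AE in \<open>auto simp: meas_haar_iff f_bound elim!: eventually_mono\<close>)
qed

lemma AU_right: "AU X (U ** W) = cadj W ** AU X U ** W"
  by (simp add: AU_def cadj_mult matrix_mul_assoc)

lemma prod4: "(\<Sum>p\<in>A. \<Sum>q\<in>B. F p q) * (\<Sum>r\<in>C. \<Sum>s\<in>D. G r s) = (\<Sum>p\<in>A. \<Sum>q\<in>B. \<Sum>r\<in>C. \<Sum>s\<in>D. (F p q * G r s :: complex))"
proof -
  have "(\<Sum>p\<in>A. \<Sum>q\<in>B. F p q) * (\<Sum>r\<in>C. \<Sum>s\<in>D. G r s) = (\<Sum>p\<in>A. \<Sum>q\<in>B. F p q * (\<Sum>r\<in>C. \<Sum>s\<in>D. G r s))"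
    by (simp add: sum_distrib_right)
  also have "\<dots> = (\<Sum>p\<in>A. \<Sum>q\<in>B. \<Sum>r\<in>C. \<Sum>s\<in>D. (F p q * G r s :: complex))"
    by (simp only: sum_distrib_left)
  finally show ?thesis .
qed

lemma KK_transform:
  assumes W: "unitary_mat W"
  shows "KK X a b c e = (\<Sum>p\<in>UNIV. \<Sum>q\<in>UNIV. \<Sum>r\<in>UNIV. \<Sum>s\<in>UNIV.
            (cnj (W$p$a) * W$q$b * W$r$c * cnj (W$s$e)) * KK X p q r s)"
proof -
  have "KK X a b c e = (\<integral>U. AU X (U ** W) $a$b * cnj (AU X (U ** W) $c$e) \<partial>haar)"
    unfolding KK_def
    by (rule right_int[OF W, symmetric, where C="(\<Sum>p\<in>UNIV. \<Sum>q\<in>UNIV. cmod (X$p$q))^2"])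
       (simp_all add: f_bound)
  also have "\<dots> = (\<integral>U. (\<Sum>p\<in>UNIV. \<Sum>q\<in>UNIV. \<Sum>r\<in>UNIV. \<Sum>s\<in>UNIV.
            (cnj (W$p$a) * W$q$b * W$r$c * cnj (W$s$e)) * (AU X U $p$q * cnj (AU X U $r$s))) \<partial>haar)"
  proof (rule Bochner_Integration.integral_cong[OF refl])
    fix U
    show "AU X (U ** W) $a$b * cnj (AU X (U ** W) $c$e) = (\<Sum>p\<in>UNIV. \<Sum>q\<in>UNIV. \<Sum>r\<in>UNIV. \<Sum>s\<in>UNIV.
            (cnj (W$p$a) * W$q$b * W$r$c * cnj (W$s$e)) * (AU X U $p$q * cnj (AU X U $r$s)))"
      unfolding AU_right conj_entry cnj_sum prod4
      by (intro sum.cong refl) (simp add: mult_ac)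
  qed
  also have "\<dots> = (\<Sum>p\<in>UNIV. \<Sum>q\<in>UNIV. \<Sum>r\<in>UNIV. \<Sum>s\<in>UNIV.
            (cnj (W$p$a) * W$q$b * W$r$c * cnj (W$s$e)) * KK X p q r s)"
    unfolding KK_def
    by (simp add: integral_sum integrable_sum f_integrable)
  finally show ?thesis .
qed



lemma sum_single: "(\<And>p. p \<noteq> pa \<Longrightarrow> g p = 0) \<Longrightarrow> (\<Sum>p\<in>(UNIV::'a::finite set). g p) = g pa"
  by (subst sum.remove[of _ pa]) (auto intro!: sum.neutral)

lemma sum4_single:
  fixes F :: "'d::finite \<Rightarrow> 'd \<Rightarrow> 'd \<Rightarrow> 'd \<Rightarrow> complex"
  assumes "\<And>p q r s. \<not> (p = pa \<and> q = qa \<and> r = ra \<and> s = sa) \<Longrightarrow> F p q r s = 0"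
  shows "(\<Sum>p\<in>UNIV. \<Sum>q\<in>UNIV. \<Sum>r\<in>UNIV. \<Sum>s\<in>UNIV. F p q r s) = F pa qa ra sa"
  using assms by (intro trans[OF sum_single] sum_single; auto intro!: sum.neutral)+

lemma sum_sub: "(\<And>p. p \<notin> S \<Longrightarrow> g p = 0) \<Longrightarrow> (\<Sum>p\<in>(UNIV::'a::finite set). g p) = (\<Sum>p\<in>S. g p)"
  by (rule sum.mono_neutral_right) auto

lemma sum4_sub:
  fixes F :: "'d::finite \<Rightarrow> 'd \<Rightarrow> 'd \<Rightarrow> 'd \<Rightarrow> complex"
  assumes "\<And>p q r s. \<not> (p \<in> S \<and> q \<in> S \<and> r \<in> S \<and> s \<in> S) \<Longrightarrow> F p q r s = 0"
  shows "(\<Sum>p\<in>UNIV. \<Sum>q\<in>UNIV. \<Sum>r\<in>UNIV. \<Sum>s\<in>UNIV. F p q r s) = (\<Sum>p\<in>S. \<Sum>q\<in>S. \<Sum>r\<in>S. \<Sum>s\<in>S. F p q r s)"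
proof -
  have "(\<Sum>p\<in>UNIV. \<Sum>q\<in>UNIV. \<Sum>r\<in>UNIV. \<Sum>s\<in>UNIV. F p q r s) = (\<Sum>p\<in>S. \<Sum>q\<in>UNIV. \<Sum>r\<in>UNIV. \<Sum>s\<in>UNIV. F p q r s)"
    using assms by (intro sum_sub) (auto intro!: sum.neutral)
  also have "\<dots> = (\<Sum>p\<in>S. \<Sum>q\<in>S. \<Sum>r\<in>UNIV. \<Sum>s\<in>UNIV. F p q r s)"
    using assms by (intro sum.cong refl sum_sub) (auto intro!: sum.neutral)
  also have "\<dots> = (\<Sum>p\<in>S. \<Sum>q\<in>S. \<Sum>r\<in>S. \<Sum>s\<in>UNIV. F p q r s)"
    using assms by (intro sum.cong refl sum_sub) (auto intro!: sum.neutral)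
  also have "\<dots> = (\<Sum>p\<in>S. \<Sum>q\<in>S. \<Sum>r\<in>S. \<Sum>s\<in>S. F p q r s)"
    using assms by (intro sum.cong refl sum_sub) auto
  finally show ?thesis .
qed

definition Pm :: "('d \<Rightarrow> 'd) \<Rightarrow> complex^'d::finite^'d" where
  "Pm \<sigma> = (\<chi> i j. if i = \<sigma> j then 1 else 0)"

lemma Pm_unitary: assumes "bij \<sigma>" shows "unitary_mat (Pm \<sigma>)"
proof -
  have "(cadj (Pm \<sigma>) ** Pm \<sigma>) $ j $ k = (if j = k then 1 else 0)" for j k
  proof -
    have "(cadj (Pm \<sigma>) ** Pm \<sigma>) $ j $ k = (\<Sum>i\<in>UNIV. if i = \<sigma> j then (if \<sigma> j = \<sigma> k then 1 else 0) else 0)"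
      unfolding matrix_matrix_mult_def vec_lambda_beta by (intro sum.cong refl) (auto simp: Pm_def)
    also have "\<dots> = (if \<sigma> j = \<sigma> k then 1 else 0)" by simp
    finally show ?thesis using assms by (simp add: bij_def inj_eq)
  qed
  thus ?thesis by (simp add: unitary_mat_left vec_eq_iff mat_def)
qed

lemma KK_perm:
  assumes "bij \<sigma>"
  shows "KK X a b c e = KK X (\<sigma> a) (\<sigma> b) (\<sigma> c) (\<sigma> e)"
  unfolding KK_transform[OF Pm_unitary[OF assms], of X a b c e]
  by (subst sum4_single[where pa="\<sigma> a" and qa="\<sigma> b" and ra="\<sigma> c" and sa="\<sigma> e"]) (auto simp: Pm_def)

definition Dm :: "'d \<Rightarrow> complex^'d::finite^'d" where
  "Dm t = (\<chi> i j. if i = j then (if i = t then \<i> else 1) else 0)"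

lemma Dm_unitary: "unitary_mat (Dm t)"
proof -
  have "(cadj (Dm t) ** Dm t) $ j $ k = (if j = k then 1 else 0)" for j k
  proof -
    have "(cadj (Dm t) ** Dm t) $ j $ k = (\<Sum>i\<in>UNIV. if i = j then (if i = k then cnj (if i = t then \<i> else 1) * (if i = t then \<i> else 1) else 0) else 0)"
      unfolding matrix_matrix_mult_def vec_lambda_beta by (intro sum.cong refl) (auto simp: Dm_def)
    also have "\<dots> = (if j = k then 1 else 0)" by simp
    finally show ?thesis .
  qed
  thus ?thesis by (simp add: unitary_mat_left vec_eq_iff mat_def)
qed

lemma KK_diag:
  "KK X a b c e = cnj (if a = t then \<i> else 1) * (if b = t then \<i> else 1) * (if c = t then \<i> else 1) * cnj (if e = t then \<i> else 1) * KK X a b c e"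
  by (subst KK_transform[OF Dm_unitary[of t]], subst sum4_single[where pa=a and qa=b and ra=c and sa=e]) (auto simp: Dm_def)

lemma KK_zero:
  assumes "\<not> ((a = b \<and> c = e) \<or> (a = c \<and> b = e))"
  shows "KK X a b c e = 0"
proof -
  have key: "KK X a b c e = f * KK X a b c e \<Longrightarrow> f \<noteq> 1 \<Longrightarrow> KK X a b c e = 0" for f
    by (metis mult_cancel_right2)
  show ?thesis
  proof (cases "b = a \<or> b = e")
    case False
    show ?thesis by (rule key[OF KK_diag[of X a b c e b]]) (use False in \<open>cases "c = b"; auto\<close>)
  next
    case True
    show ?thesis by (rule key[OF KK_diag[of X a b c e c]]) (use True assms in \<open>cases "a = c"; cases "e = c"; auto\<close>)
  qed
qed



definition rs :: complex where "rs = of_real (sqrt 2 / 2)"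

lemma rs_sq: "rs * rs = 1/2"
proof -
  have "(sqrt 2 / 2) * (sqrt 2 / 2) = (1/2::real)" by (simp add: field_simps)
  hence "of_real ((sqrt 2 / 2) * (sqrt 2 / 2)) = (of_real (1/2) :: complex)" by simp
  thus ?thesis unfolding rs_def of_real_mult by simp
qed

lemma rs_cnj[simp]: "cnj rs = rs" by (simp add: rs_def)

definition Rm :: "'d \<Rightarrow> 'd \<Rightarrow> complex^'d::finite^'d" where
  "Rm x y = (\<chi> i j. if j = x then (if i = x \<or> i = y then rs else 0)
                     else if j = y then (if i = x then - rs else if i = y then rs else 0)
                     else (if i = j then 1 else 0))"

lemma Rm_unitary:
  fixes x y :: "'d::finite"
  assumes xy: "x \<noteq> y" shows "unitary_mat (Rm x y)"
proof -
  let ?R = "Rm x y"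
  have ent: "(cadj ?R ** ?R) $ j $ k = (\<Sum>i\<in>UNIV. cnj (?R$i$j) * ?R$i$k)" for j k
    by (simp add: matrix_matrix_mult_def)
  have "(cadj ?R ** ?R) $ j $ k = (if j = k then 1 else 0)" for j k
  proof (cases "j \<in> {x,y} \<and> k \<in> {x,y}")
    case True
    have "(cadj ?R ** ?R) $ j $ k = (\<Sum>i\<in>{x,y}. cnj (?R$i$j) * ?R$i$k)"
      unfolding ent using True by (intro sum_sub) (auto simp: Rm_def)
    also have "\<dots> = (if j = k then 1 else 0)"
      using True xy by (auto simp: Rm_def rs_sq)
    finally show ?thesis .
  next
    case False
    hence "j \<notin> {x,y} \<or> k \<notin> {x,y}" by blast
    thus ?thesis
    proof
      assume j: "j \<notin> {x,y}"
      have "(cadj ?R ** ?R) $ j $ k = (\<Sum>i\<in>UNIV. if i = j then ?R$j$k else 0)"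
        unfolding ent using j by (intro sum.cong refl) (auto simp: Rm_def)
      also have "\<dots> = (if j = k then 1 else 0)" using j by (simp add: Rm_def)
      finally show ?thesis .
    next
      assume k: "k \<notin> {x,y}"
      have "(cadj ?R ** ?R) $ j $ k = (\<Sum>i\<in>UNIV. if i = k then cnj (?R$k$j) else 0)"
        unfolding ent using k by (intro sum.cong refl) (auto simp: Rm_def)
      also have "\<dots> = (if j = k then 1 else 0)" using k by (auto simp: Rm_def)
      finally show ?thesis .
    qed
  qed
  thus ?thesis by (simp add: unitary_mat_left vec_eq_iff mat_def)
qed

definition swp :: "'d \<Rightarrow> 'd \<Rightarrow> 'd \<Rightarrow> 'd" where
  "swp x y i = (if i = x then y else if i = y then x else i)"

lemma bij_swp: "bij (swp x y)"
  by (rule o_bij[of "swp x y"]) (auto simp: swp_def fun_eq_iff)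

lemma KK_rot:
  fixes x y :: "'d::finite"
  assumes xy: "x \<noteq> y"
  shows "KK X x x x x = KK X x x y y + KK X x y x y"
proof -
  let ?R = "Rm x y :: complex^'d^'d"
  have sy: "swp x y x = y" "swp x y y = x" by (auto simp: swp_def)
  have e1: "KK X y y y y = KK X x x x x" using KK_perm[OF bij_swp, of X x x x x x y] sy by simp
  have e2: "KK X y y x x = KK X x x y y" using KK_perm[OF bij_swp, of X x x y y x y] sy by simp
  have e3: "KK X y x y x = KK X x y x y" using KK_perm[OF bij_swp, of X x y x y x y] sy by simp
  have "KK X x x x x = (\<Sum>p\<in>{x,y}. \<Sum>q\<in>{x,y}. \<Sum>r\<in>{x,y}. \<Sum>s\<in>{x,y}.
            (cnj (?R$p$x) * ?R$q$x * ?R$r$x * cnj (?R$s$x)) * KK X p q r s)"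
    unfolding KK_transform[OF Rm_unitary[OF xy], of X x x x x]
    by (rule sum4_sub) (auto simp: Rm_def)
  also have "\<dots> = (rs*rs)*(rs*rs) * (2 * KK X x x x x + 2 * KK X x x y y + 2 * KK X x y x y)"
    using xy by (simp add: Rm_def KK_zero e1 e2 e3 algebra_simps)
  also have "\<dots> = (KK X x x x x + KK X x x y y + KK X x y x y) / 2"
    by (simp add: rs_sq)
  finally show ?thesis by (simp add: field_simps)
qed



lemma perm_exists:
  fixes x0 y0 a c :: "'d::finite"
  assumes "x0 \<noteq> y0" "a \<noteq> c"
  shows "\<exists>\<sigma>. bij \<sigma> \<and> \<sigma> x0 = a \<and> \<sigma> y0 = c"
proof -
  let ?t = "swp x0 a"
  let ?u = "swp (?t y0) c"
  have "?t y0 \<noteq> a" using assms by (auto simp: swp_def)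
  hence "(?u \<circ> ?t) x0 = a" "(?u \<circ> ?t) y0 = c" using assms by (auto simp: swp_def)
  moreover have "bij (?u \<circ> ?t)" by (intro bij_comp bij_swp)
  ultimately show ?thesis by blast
qed

lemma trace_AU: "unitary_mat U \<Longrightarrow> trace (AU X U) = trace X"
  unfolding AU_def
  by (metis trace_mul_sym matrix_mul_assoc matrix_mul_lid unitary_mat_def)

lemma AU_AUadj: "unitary_mat U \<Longrightarrow> AU X U ** cadj (AU X U) = AU (X ** cadj X) U"
  unfolding AU_def cadj_mult cadj_cadj unitary_mat_def
  by (metis (no_types, lifting) matrix_mul_assoc matrix_mul_lid)

lemma KK_E1:
  fixes X :: "complex^'d::finite^'d"
  assumes tr: "trace X = 0"
  shows "(\<Sum>a\<in>UNIV. KK X a a c c) = 0"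
proof -
  have "(\<Sum>a\<in>UNIV. KK X a a c c) = (\<integral>U. (\<Sum>a\<in>UNIV. AU X U $a$a) * cnj (AU X U $c$c) \<partial>haar)"
    unfolding KK_def sum_distrib_right by (simp add: integral_sum f_integrable)
  also have "\<dots> = (\<integral>U. 0 \<partial>(haar :: (complex^'d^'d) measure))"
  proof (rule integral_cong_AE)
    show "AE U in haar. (\<Sum>a\<in>UNIV. AU X U $a$a) * cnj (AU X U $c$c) = 0"
      using haar_AE by eventually_elim (simp add: trace_AU[unfolded trace_def] tr[unfolded trace_def])
  qed (simp_all add: meas_haar_iff)
  finally show ?thesis by simp
qed

lemma KK_E2:
  assumes tr: "trace (X ** cadj X) = of_nat CARD('d::finite)"
  shows "(\<Sum>a\<in>UNIV. \<Sum>b\<in>UNIV. KK X a b a (b::'d)) = of_nat CARD('d)"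
proof -
  have "(\<Sum>a\<in>UNIV. \<Sum>b\<in>UNIV. KK X a b a b) = (\<integral>U. (\<Sum>a\<in>UNIV. \<Sum>b\<in>UNIV. AU X U $a$b * cnj (AU X U $a$b)) \<partial>haar)"
    unfolding KK_def
    by (simp add: integral_sum f_integrable integrable_sum)
  also have "\<dots> = (\<integral>U. of_nat CARD('d) \<partial>(haar :: (complex^'d^'d) measure))"
  proof (rule integral_cong_AE)
    show "AE U in haar. (\<Sum>a\<in>UNIV. \<Sum>b\<in>UNIV. AU X U $a$b * cnj (AU X U $a$b)) = of_nat CARD('d)"
      using haar_AE
    proof eventually_elim
      fix U :: "complex^'d^'d" assume U: "unitary_mat U"
      have "(\<Sum>a\<in>UNIV. \<Sum>b\<in>UNIV. AU X U $a$b * cnj (AU X U $a$b)) = trace (AU X U ** cadj (AU X U))"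
        by (simp add: trace_def matrix_matrix_mult_def)
      also have "\<dots> = of_nat CARD('d)" using U tr by (simp add: AU_AUadj trace_AU)
      finally show "(\<Sum>a\<in>UNIV. \<Sum>b\<in>UNIV. AU X U $a$b * cnj (AU X U $a$b)) = of_nat CARD('d)" .
    qed
  qed (simp_all add: meas_haar_iff)
  finally show ?thesis by simp
qed

lemma KK_form:
  fixes X :: "complex^'d::finite^'d"
  assumes d2: "CARD('d) \<ge> 2" and tr: "trace X = 0" and tr2: "trace (X ** cadj X) = of_nat CARD('d)"
  shows "KK X a b c e = (if a = b \<and> c = e then 1 / (1 - of_nat CARD('d)^2) else 0)
                      + (if a = c \<and> b = e then - of_nat CARD('d) / (1 - of_nat CARD('d)^2) else 0)"
proof -
  obtain x0 y0 :: 'd where xy: "x0 \<noteq> y0"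
  proof -
    obtain x0 :: 'd where True by blast
    have "UNIV \<noteq> {x0}" proof
      assume u: "UNIV = {x0}"
      have "card (UNIV::'d set) = card {x0}" by (simp only: u)
      hence "CARD('d) = 1" by simp
      thus False using d2 by simp
    qed
    then obtain y0 where "y0 \<noteq> x0" by blast
    thus ?thesis using that by blast
  qed
  define \<alpha> where "\<alpha> = KK X x0 x0 y0 y0"
  define \<beta> where "\<beta> = KK X x0 y0 x0 y0"
  have form: "KK X a b c e = (if a = b \<and> c = e then \<alpha> else 0) + (if a = c \<and> b = e then \<beta> else 0)" for a b c e
  proof (cases "(a = b \<and> c = e) \<or> (a = c \<and> b = e)")
    case False then show ?thesis using KK_zero[OF False] by auto
  next
    case True
    show ?thesis
    proof (cases "a = b \<and> b = c \<and> c = e")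
      case all: True
      have "KK X x0 x0 x0 x0 = KK X a a a a"
        using KK_perm[OF bij_swp, of X x0 x0 x0 x0 x0 a] by (simp add: swp_def)
      moreover have "KK X x0 x0 x0 x0 = \<alpha> + \<beta>" using KK_rot[OF xy] by (simp add: \<alpha>_def \<beta>_def)
      ultimately show ?thesis using all by simp
    next
      case nall: False
      show ?thesis
      proof (cases "a = b \<and> c = e")
        case ab: True
        hence ac: "a \<noteq> c" using nall by auto
        obtain \<sigma> where s: "bij \<sigma>" "\<sigma> x0 = a" "\<sigma> y0 = c" using perm_exists[OF xy ac] by blast
        have "KK X a a c c = \<alpha>" unfolding \<alpha>_def using KK_perm[OF s(1), of X x0 x0 y0 y0] s by simp
        thus ?thesis using ab ac by auto
      next
        case nab: False
        hence ac: "a = c \<and> b = e" "a \<noteq> b" using True nall by auto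
        obtain \<sigma> where s: "bij \<sigma>" "\<sigma> x0 = a" "\<sigma> y0 = b" using perm_exists[OF xy ac(2)] by blast
        have "KK X a b a b = \<beta>" unfolding \<beta>_def using KK_perm[OF s(1), of X x0 y0 x0 y0] s by simp
        thus ?thesis using ac nab by auto
      qed
    qed
  qed
  let ?d = "of_nat CARD('d) :: complex"
  have E1: "?d * \<alpha> + \<beta> = 0"
  proof -
    have "(\<Sum>a\<in>UNIV. KK X a a x0 x0) = (\<Sum>a::'d\<in>UNIV. \<alpha> + (if a = x0 then \<beta> else 0))"
      by (intro sum.cong refl) (auto simp: form)
    also have "\<dots> = ?d * \<alpha> + \<beta>" by (simp add: sum.distrib)
    finally show ?thesis using KK_E1[OF tr, of x0] by simp
  qed
  have E2: "?d * \<alpha> + ?d * ?d * \<beta> = ?d"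
  proof -
    have "(\<Sum>a\<in>UNIV. \<Sum>b\<in>UNIV. KK X a b a b) = (\<Sum>a::'d\<in>UNIV. \<Sum>b::'d\<in>UNIV. (if a = b then \<alpha> else 0) + \<beta>)"
      by (intro sum.cong refl) (auto simp: form)
    also have "\<dots> = ?d * \<alpha> + ?d * ?d * \<beta>" by (simp add: sum.distrib algebra_simps)
    finally show ?thesis using KK_E2[OF tr2] by simp
  qed
  have dne: "1 - ?d^2 \<noteq> 0"
  proof
    assume "1 - ?d^2 = 0"
    hence "?d^2 = 1" by simp
    hence "(CARD('d))^2 = 1" by (metis of_nat_1 of_nat_eq_iff of_nat_power)
    hence "CARD('d) = 1" by simp
    thus False using d2 by simp
  qed
  have b: "\<beta> = - ?d * \<alpha>" using E1 by (simp add: algebra_simps add_eq_0_iff2)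
  have E2': "?d * \<alpha> + ?d * ?d * (- ?d * \<alpha>) = ?d" using E2 b by simp
  have "?d * \<alpha> * (1 - ?d^2) = ?d * \<alpha> + ?d * ?d * (- ?d * \<alpha>)"
    by (simp add: power2_eq_square ring_distribs mult_ac)
  hence "?d * \<alpha> * (1 - ?d^2) = ?d" using E2' by simp
  hence h: "?d * (\<alpha> * (1 - ?d^2)) = ?d * 1" by (simp add: mult.assoc)
  have dnz: "?d \<noteq> 0" using d2 by simp
  have "\<alpha> * (1 - ?d^2) = 1" using h dnz by (metis mult_left_cancel)
  hence a: "\<alpha> = 1 / (1 - ?d^2)" using dne by (simp add: eq_divide_eq)
  show ?thesis unfolding form a b by simp
qed



lemma psf: "product_sigma_finite (\<lambda>_::'n. haar :: (complex^'d::finite^'d) measure)"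
  by (simp add: product_sigma_finite_def prob_space_imp_sigma_finite haar_prob)

lemma tensor_entry: "tensor_prod A $ j $ i = (\<Prod>n\<in>UNIV. A n $ (j n) $ (i n))"
  by (simp add: tensor_prod_def)

lemma pointwise:
  fixes \<rho> :: "complex^('n::finite \<Rightarrow> 'd::finite)^('n \<Rightarrow> 'd)"
  shows "(cmod (trace (\<rho> ** tensor_prod A)))^2 =
    Re (\<Sum>i\<in>UNIV. \<Sum>j\<in>UNIV. \<Sum>k\<in>UNIV. \<Sum>l\<in>UNIV. \<rho>$i$j * cnj (\<rho>$k$l) *
        (\<Prod>n\<in>UNIV. A n $ (j n) $ (i n) * cnj (A n $ (l n) $ (k n))))"
proof -
  let ?z = "trace (\<rho> ** tensor_prod A)"
  have z: "?z = (\<Sum>i\<in>UNIV. \<Sum>j\<in>UNIV. \<rho>$i$j * (\<Prod>n\<in>UNIV. A n $ (j n) $ (i n)))"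
    by (simp add: trace_def matrix_matrix_mult_def tensor_entry)
  have "(cmod ?z)^2 = Re (?z * cnj ?z)"
    by (metis Re_complex_of_real complex_norm_square)
  also have "?z * cnj ?z = (\<Sum>i\<in>UNIV. \<Sum>j\<in>UNIV. \<Sum>k\<in>UNIV. \<Sum>l\<in>UNIV.
        (\<rho>$i$j * (\<Prod>n\<in>UNIV. A n $ (j n) $ (i n))) * cnj (\<rho>$k$l * (\<Prod>n\<in>UNIV. A n $ (l n) $ (k n))))"
    unfolding z cnj_sum prod4 ..
  also have "\<dots> = (\<Sum>i\<in>UNIV. \<Sum>j\<in>UNIV. \<Sum>k\<in>UNIV. \<Sum>l\<in>UNIV. \<rho>$i$j * cnj (\<rho>$k$l) *
        (\<Prod>n\<in>UNIV. A n $ (j n) $ (i n) * cnj (A n $ (l n) $ (k n))))"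
    by (intro sum.cong refl) (simp add: prod.distrib cnj_prod mult_ac)
  finally show ?thesis .
qed

lemma R_expand:
  fixes \<rho> :: "complex^('n::finite \<Rightarrow> 'd::finite)^('n \<Rightarrow> 'd)"
  shows "R_fun \<rho> lam = Re (\<Sum>i\<in>UNIV. \<Sum>j\<in>UNIV. \<Sum>k\<in>UNIV. \<Sum>l\<in>UNIV. \<rho>$i$j * cnj (\<rho>$k$l) *
        (\<Prod>n\<in>UNIV. KK (cadj (lam n)) (j n) (i n) (l n) (k n)))"
proof -
  interpret P: product_sigma_finite "\<lambda>_::'n. haar :: (complex^'d^'d) measure" by (rule psf)
  let ?M = "PiM UNIV (\<lambda>_::'n. haar :: (complex^'d^'d) measure)"
  let ?g = "\<lambda>i j k l (Us::'n \<Rightarrow> complex^'d^'d). (\<Prod>n\<in>UNIV. AU (cadj (lam n)) (Us n) $ (j n) $ (i n) * cnj (AU (cadj (lam n)) (Us n) $ (l n) $ (k n)))"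
  have gint: "integrable ?M (?g i j k l)" for i j k l
    by (rule P.product_integrable_prod) (simp_all add: f_integrable)
  have gval: "(\<integral>Us. ?g i j k l Us \<partial>?M) = (\<Prod>n\<in>UNIV. KK (cadj (lam n)) (j n) (i n) (l n) (k n))" for i j k l
    unfolding KK_def by (rule P.product_integral_prod) (simp_all add: f_integrable)
  have "R_fun \<rho> lam = (\<integral>Us. Re (\<Sum>i\<in>UNIV. \<Sum>j\<in>UNIV. \<Sum>k\<in>UNIV. \<Sum>l\<in>UNIV. \<rho>$i$j * cnj (\<rho>$k$l) * ?g i j k l Us) \<partial>?M)"
    unfolding R_fun_def by (simp add: pointwise AU_def)
  also have "\<dots> = Re (\<integral>Us. (\<Sum>i\<in>UNIV. \<Sum>j\<in>UNIV. \<Sum>k\<in>UNIV. \<Sum>l\<in>UNIV. \<rho>$i$j * cnj (\<rho>$k$l) * ?g i j k l Us) \<partial>?M)"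
    by (rule integral_Re) (intro Bochner_Integration.integrable_sum integrable_mult_right gint)
  also have "(\<integral>Us. (\<Sum>i\<in>UNIV. \<Sum>j\<in>UNIV. \<Sum>k\<in>UNIV. \<Sum>l\<in>UNIV. \<rho>$i$j * cnj (\<rho>$k$l) * ?g i j k l Us) \<partial>?M)
      = (\<Sum>i\<in>UNIV. \<Sum>j\<in>UNIV. \<Sum>k\<in>UNIV. \<Sum>l\<in>UNIV. \<rho>$i$j * cnj (\<rho>$k$l) * (\<integral>Us. ?g i j k l Us \<partial>?M))"
    by (simp add: integral_sum integrable_sum integrable_mult_right gint del: integral_mult_right_zero)
  finally show ?thesis unfolding gval .
qed

theorem theorem9:
  fixes \<rho> :: "complex^('n::finite \<Rightarrow> 'd::finite)^('n \<Rightarrow> 'd)"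
  assumes "CARD('d) \<ge> 2"
    and "is_state \<rho>"
    and "\<forall>n. trace (lam n) = 0 \<and> trace (lam n ** cadj (lam n)) = of_nat CARD('d)"
    and "\<forall>n. trace (mu n) = 0 \<and> trace (mu n ** cadj (mu n)) = of_nat CARD('d)"
  shows "R_fun \<rho> lam = R_fun \<rho> mu"
proof -
  have cond: "trace (cadj L) = 0 \<and> trace (cadj L ** cadj (cadj L)) = of_nat CARD('d)"
    if "trace L = 0 \<and> trace (L ** cadj L) = of_nat CARD('d)" for L :: "complex^'d^'d"
  proof
    show "trace (cadj L) = 0" using that by (simp add: trace_def flip: cnj_sum)
    show "trace (cadj L ** cadj (cadj L)) = of_nat CARD('d)"
      using that by (simp add: trace_mul_sym[of "cadj L"])
  qed
  have "KK (cadj (lam n)) a b c e = KK (cadj (mu n)) a b c e" for n a b c e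
    using KK_form[OF assms(1) cond[of "lam n", THEN conjunct1] cond[of "lam n", THEN conjunct2]]
          KK_form[OF assms(1) cond[of "mu n", THEN conjunct1] cond[of "mu n", THEN conjunct2]]
          assms(3,4) by simp
  thus ?thesis unfolding R_expand by simp
qed


end
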